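(* Let $G$ be a finite graph, $D$ a divisor on $G$, and $f \in R(G,D)$. Then $f$ is an extremal of $R(G,D)$ if and only if there do not exist two proper subsets $V_1, V_2 \subsetneq V(G)$ with $V_1\cup V_2=V(G)$ such that each of $V_1$ and $V_2$ can fire on $D+\mathrm{div}(f)$.
   Context: A finite graph $G$ is connected, with finitely many vertices $V(G)$ and edges $E(G)$, loops and multiple edges allowed. A divisor on $G$ is a formal sum $D=\sum_{x\in V(G)}D(x)[x]$, $D(x)\in{\mathbb{Z}}$; effective if all $D(x)\ge0$. A rational function is $f:V(G)\to{\mathbb{Z}}$; $\mathrm{ord}_x(f)=\sum_{e=\overline{xy}\in E(G)}(f(y)-f(x))$ and $\mathrm{div}(f)=\sum_x\mathrm{ord}_x(f)[x]$. $R(G,D)=\{f: D+\mathrm{div}(f)\ge0\}$. An extremal of $R(G,D)$ is $f\in R(G,D)$ such that $f=\max(g,h)$ with $g,h\in R(G,D)$ implies $f=g$ or $f=h$. For $V'\subseteq V(G)$, $\mathrm{CF}(V')$ is the function equal to $0$ on $V'$ and $-1$ off $V'$; $V'$ can fire on a divisor $E$ if $E+\mathrm{div}(\mathrm{CF}(V'))$ is effective. *)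

theory Defs
  imports Main
begin

text \<open>A finite multigraph (loops and multiple edges allowed): vertex set V, edge set E,
  and each edge e has endpoints ends e = (u, v).\<close>

definition multigraph :: "'v set \<Rightarrow> 'e set \<Rightarrow> ('e \<Rightarrow> 'v \<times> 'v) \<Rightarrow> bool" where
  "multigraph V E ends \<longleftrightarrow> finite V \<and> finite E \<and>
     (\<forall>e\<in>E. fst (ends e) \<in> V \<and> snd (ends e) \<in> V)"

definition adj :: "'e set \<Rightarrow> ('e \<Rightarrow> 'v \<times> 'v) \<Rightarrow> ('v \<times> 'v) set" where
  "adj E ends = {(u, v). \<exists>e\<in>E. ends e = (u, v) \<or> ends e = (v, u)}"

definition connected_graph :: "'v set \<Rightarrow> 'e set \<Rightarrow> ('e \<Rightarrow> 'v \<times> 'v) \<Rightarrow> bool" where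
  "connected_graph V E ends \<longleftrightarrow> multigraph V E ends \<and> V \<noteq> {} \<and>
     (\<forall>x\<in>V. \<forall>y\<in>V. (x, y) \<in> (adj E ends)\<^sup>*)"

definition ord_at :: "'e set \<Rightarrow> ('e \<Rightarrow> 'v \<times> 'v) \<Rightarrow> ('v \<Rightarrow> int) \<Rightarrow> 'v \<Rightarrow> int" where
  "ord_at E ends f x =
     (\<Sum>e\<in>{e\<in>E. fst (ends e) = x}. f (snd (ends e)) - f x) +
     (\<Sum>e\<in>{e\<in>E. snd (ends e) = x}. f (fst (ends e)) - f x)"

text \<open>Divisors are functions V \<rightarrow> int (values off V irrelevant).\<close>
definition div_fun :: "'e set \<Rightarrow> ('e \<Rightarrow> 'v \<times> 'v) \<Rightarrow> ('v \<Rightarrow> int) \<Rightarrow> 'v \<Rightarrow> int" where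
  "div_fun E ends f = (\<lambda>x. ord_at E ends f x)"

definition effective :: "'v set \<Rightarrow> ('v \<Rightarrow> int) \<Rightarrow> bool" where
  "effective V D \<longleftrightarrow> (\<forall>x\<in>V. D x \<ge> 0)"

text \<open>Rational functions f : V \<rightarrow> int, represented extensionally (0 off V).\<close>
definition R_space :: "'v set \<Rightarrow> 'e set \<Rightarrow> ('e \<Rightarrow> 'v \<times> 'v) \<Rightarrow> ('v \<Rightarrow> int) \<Rightarrow> ('v \<Rightarrow> int) set" where
  "R_space V E ends D = {f. (\<forall>x. x \<notin> V \<longrightarrow> f x = 0) \<and>
      effective V (\<lambda>x. D x + div_fun E ends f x)}"

definition extremal :: "('v \<Rightarrow> int) set \<Rightarrow> ('v \<Rightarrow> int) \<Rightarrow> bool" where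
  "extremal S f \<longleftrightarrow> f \<in> S \<and>
     (\<forall>g\<in>S. \<forall>h\<in>S. f = (\<lambda>x. max (g x) (h x)) \<longrightarrow> f = g \<or> f = h)"

definition CF :: "'v set \<Rightarrow> 'v set \<Rightarrow> 'v \<Rightarrow> int" where
  "CF V V' = (\<lambda>x. if x \<in> V' then 0 else if x \<in> V then -1 else 0)"

definition can_fire :: "'v set \<Rightarrow> 'e set \<Rightarrow> ('e \<Rightarrow> 'v \<times> 'v) \<Rightarrow> 'v set \<Rightarrow> ('v \<Rightarrow> int) \<Rightarrow> bool" where
  "can_fire V E ends V' D' \<longleftrightarrow> effective V (\<lambda>x. D' x + div_fun E ends (CF V V') x)"

end

theory Submission
  imports Defs
begin

lemma ord_at_add:
  "ord_at E ends (\<lambda>x. f x + g x) x = ord_at E ends f x + ord_at E ends g x"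
  unfolding ord_at_def by (simp add: sum.distrib[symmetric] algebra_simps)

lemma ord_at_mono:
  assumes "multigraph V E ends" "\<And>y. y \<in> V \<Longrightarrow> F y - F x \<ge> g y - g x"
  shows "ord_at E ends F x \<ge> ord_at E ends g x"
proof -
  have A: "\<And>e. e \<in> E \<Longrightarrow> fst (ends e) \<in> V \<and> snd (ends e) \<in> V"
    using assms(1) unfolding multigraph_def by blast
  have "(\<Sum>e\<in>{e\<in>E. fst (ends e) = x}. g (snd (ends e)) - g x)
      \<le> (\<Sum>e\<in>{e\<in>E. fst (ends e) = x}. F (snd (ends e)) - F x)"
    by (rule sum_mono) (use A assms(2) in auto)
  moreover have "(\<Sum>e\<in>{e\<in>E. snd (ends e) = x}. g (fst (ends e)) - g x)
      \<le> (\<Sum>e\<in>{e\<in>E. snd (ends e) = x}. F (fst (ends e)) - F x)"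
    by (rule sum_mono) (use A assms(2) in auto)
  ultimately show ?thesis unfolding ord_at_def by linarith
qed

theorem lemma3p3:
  fixes V :: "'v set" and E :: "'e set" and ends :: "'e \<Rightarrow> 'v \<times> 'v"
    and D :: "'v \<Rightarrow> int" and f :: "'v \<Rightarrow> int"
  assumes "connected_graph V E ends"
    and "f \<in> R_space V E ends D"
  shows "extremal (R_space V E ends D) f \<longleftrightarrow>
    \<not> (\<exists>V1 V2. V1 \<subset> V \<and> V2 \<subset> V \<and> V1 \<union> V2 = V \<and>
          can_fire V E ends V1 (\<lambda>x. D x + div_fun E ends f x) \<and>
          can_fire V E ends V2 (\<lambda>x. D x + div_fun E ends f x))"
proof
  have mg: "multigraph V E ends" using assms(1) connected_graph_def by blast
  have f0: "\<And>x. x \<notin> V \<Longrightarrow> f x = 0" and fe: "\<And>x. x \<in> V \<Longrightarrow> D x + ord_at E ends f x \<ge> 0"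
    using assms(2) by (auto simp: R_space_def effective_def div_fun_def)
  {
    assume ext: "extremal (R_space V E ends D) f"
    show "\<not> (\<exists>V1 V2. V1 \<subset> V \<and> V2 \<subset> V \<and> V1 \<union> V2 = V \<and>
          can_fire V E ends V1 (\<lambda>x. D x + div_fun E ends f x) \<and>
          can_fire V E ends V2 (\<lambda>x. D x + div_fun E ends f x))"
    proof
      assume "\<exists>V1 V2. V1 \<subset> V \<and> V2 \<subset> V \<and> V1 \<union> V2 = V \<and>
          can_fire V E ends V1 (\<lambda>x. D x + div_fun E ends f x) \<and>
          can_fire V E ends V2 (\<lambda>x. D x + div_fun E ends f x)"
      then obtain V1 V2 where p1: "V1 \<subset> V" and p2: "V2 \<subset> V" and u: "V1 \<union> V2 = V"
        and c1: "can_fire V E ends V1 (\<lambda>x. D x + div_fun E ends f x)"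
        and c2: "can_fire V E ends V2 (\<lambda>x. D x + div_fun E ends f x)" by blast
      define g where "g = (\<lambda>x. f x + CF V V1 x)"
      define h where "h = (\<lambda>x. f x + CF V V2 x)"
      have gR: "g \<in> R_space V E ends D"
        using c1 f0 unfolding R_space_def can_fire_def effective_def div_fun_def g_def
        by (auto simp: ord_at_add CF_def algebra_simps)
      have hR: "h \<in> R_space V E ends D"
        using c2 f0 unfolding R_space_def can_fire_def effective_def div_fun_def h_def
        by (auto simp: ord_at_add CF_def algebra_simps)
      have m: "f = (\<lambda>x. max (g x) (h x))"
        using u by (auto simp: g_def h_def CF_def)
      obtain a where a: "a \<in> V" "a \<notin> V1" using p1 by blast
      obtain b where b: "b \<in> V" "b \<notin> V2" using p2 by blast
      have "f \<noteq> g" proof assume "f = g" hence "f a = g a" by simp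
        thus False using a by (simp add: g_def CF_def) qed
      moreover have "f \<noteq> h" proof assume "f = h" hence "f b = h b" by simp
        thus False using b by (simp add: h_def CF_def) qed
      ultimately show False using ext gR hR m unfolding extremal_def by blast
    qed
  }
  {
    assume nf: "\<not> (\<exists>V1 V2. V1 \<subset> V \<and> V2 \<subset> V \<and> V1 \<union> V2 = V \<and>
          can_fire V E ends V1 (\<lambda>x. D x + div_fun E ends f x) \<and>
          can_fire V E ends V2 (\<lambda>x. D x + div_fun E ends f x))"
    show "extremal (R_space V E ends D) f"
      unfolding extremal_def
    proof (intro conjI assms(2) ballI impI)
      fix g h assume gR: "g \<in> R_space V E ends D" and hR: "h \<in> R_space V E ends D"
        and m: "f = (\<lambda>x. max (g x) (h x))"
      show "f = g \<or> f = h"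
      proof (rule ccontr)
        assume ne: "\<not> (f = g \<or> f = h)"
        have key: "\<And>k W. k \<in> R_space V E ends D \<Longrightarrow> (\<forall>x. k x \<le> f x) \<Longrightarrow> f \<noteq> k \<Longrightarrow>
            W = {x\<in>V. k x = f x} \<Longrightarrow>
            W \<subset> V \<and> can_fire V E ends W (\<lambda>x. D x + div_fun E ends f x)"
        proof -
          fix k W assume kR: "k \<in> R_space V E ends D" and le: "\<forall>x. k x \<le> f x"
            and kn: "f \<noteq> k" and W: "W = {x\<in>V. k x = f x}"
          have k0: "\<And>x. x \<notin> V \<Longrightarrow> k x = 0" and ke: "\<And>x. x \<in> V \<Longrightarrow> D x + ord_at E ends k x \<ge> 0"
            using kR by (auto simp: R_space_def effective_def div_fun_def)
          obtain a where "f a \<noteq> k a" using kn by blast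
          then have "a \<in> V" "a \<notin> W" using f0 k0 W by fastforce+
          hence sub: "W \<subset> V" using W by blast
          define F where "F = (\<lambda>x. f x + CF V W x)"
          have "D x + ord_at E ends F x \<ge> 0" if xV: "x \<in> V" for x
          proof (cases "x \<in> W")
            case True
            have "ord_at E ends F x \<ge> ord_at E ends k x"
            proof (rule ord_at_mono[OF mg])
              fix y assume "y \<in> V"
              thus "F y - F x \<ge> k y - k x" using True W le[rule_format, of y]
                by (auto simp: F_def CF_def)
            qed
            thus ?thesis using ke[OF xV] by linarith
          next
            case False
            have "ord_at E ends F x \<ge> ord_at E ends f x"
            proof (rule ord_at_mono[OF mg])
              fix y assume "y \<in> V"
              thus "F y - F x \<ge> f y - f x" using False xV
                by (auto simp: F_def CF_def)
            qed
            thus ?thesis using fe[OF xV] by linarith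
          qed
          hence "can_fire V E ends W (\<lambda>x. D x + div_fun E ends f x)"
            unfolding can_fire_def effective_def div_fun_def F_def
            by (auto simp: ord_at_add algebra_simps)
          thus "W \<subset> V \<and> can_fire V E ends W (\<lambda>x. D x + div_fun E ends f x)" using sub by blast
        qed
        have 1: "{x\<in>V. g x = f x} \<subset> V \<and> can_fire V E ends {x\<in>V. g x = f x} (\<lambda>x. D x + div_fun E ends f x)"
          by (rule key[OF gR _ _ refl]) (use m ne in auto)
        have 2: "{x\<in>V. h x = f x} \<subset> V \<and> can_fire V E ends {x\<in>V. h x = f x} (\<lambda>x. D x + div_fun E ends f x)"
          by (rule key[OF hR _ _ refl]) (use m ne in auto)
        have "{x\<in>V. g x = f x} \<union> {x\<in>V. h x = f x} = V"
          using m by (auto simp: max_def)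
        thus False using 1 2 nf by blast
      qed
    qed
  }
qed

end
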